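(* Let $f(z)=\sum_{k=0}^\infty a_k z^k$ be an entire function with $a_k>0$ for all $k$ and $a_0=a_1=1$, satisfying the hypotheses: $3\le q_2\le q_3\le q_4\le\cdots$, and for every integer $j_0\ge 2$ with $q_{j_0}<4$ and $q_{j_0+1}\ge 4$, either $q_{j_0}\ge 3.4303$ or ($j_0\ge 3$ and $q_{j_0-1}/q_{j_0+1}\ge 0.525$). Let $\varphi(z):=f(-z)$ and, for $k\ge 2$, $\rho_k:=q_2q_3\cdots q_k\sqrt{q_{k+1}}$. Then for every $k\ge 2$, $$(-1)^k\varphi(\rho_k)\ge 0.$$
   Context: Here $q_n:=\frac{a_{n-1}^2}{a_{n-2}a_n}$ for $n\ge 2$ (these are the same for $f$ and $\varphi$ ). With $a_0=a_1=1$, $\varphi(z)=1-z+\sum_{k=2}^\infty \frac{(-1)^k z^k}{q_2^{k-1}q_3^{k-2}\cdots q_{k-1}^2 q_k}$. *)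

theory Defs
  imports Complex_Main
begin

definition qq :: "(nat \<Rightarrow> real) \<Rightarrow> nat \<Rightarrow> real" where
  "qq a n = (a (n - 1))^2 / (a (n - 2) * a n)"

definition rho :: "(nat \<Rightarrow> real) \<Rightarrow> nat \<Rightarrow> real" where
  "rho a k = (\<Prod>i=2..k. qq a i) * sqrt (qq a (k + 1))"

definition phi :: "(nat \<Rightarrow> real) \<Rightarrow> real \<Rightarrow> real" where
  "phi a x = (\<Sum>k. a k * (- x) ^ k)"

end

theory Submission imports Defs begin
lemma polyA: fixes s :: real assumes "s \<ge> (433/250::real)"
  shows "0 \<le> (-64::real)*s^0 + (192::real)*s^3 + (-3::real)*s^4 + (48::real)*s^5 + (-384::real)*s^6 + (192::real)*s^7"
proof -
  define t where "t = s - (433/250::real)"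
  have t0: "t \<ge> 0" using assms t_def by simp
  have e: "(-64::real)*s^0 + (192::real)*s^3 + (-3::real)*s^4 + (48::real)*s^5 + (-384::real)*s^6 + (192::real)*s^7 = ((((((((192::real) * t + (242976/125::real)) * t + (127386912/15625::real)) * t + (7050298941/390625::real)) * t + (1083061353414/48828125::real)) * t + (881780575609911/61035156250::real)) * t + (32015780716354473/7629394531250::real)) * t + (2026713223949155873/7629394531250000::real))"
    unfolding t_def by algebra
  have "0 \<le> ((((((((192::real) * t + (242976/125::real)) * t + (127386912/15625::real)) * t + (7050298941/390625::real)) * t + (1083061353414/48828125::real)) * t + (881780575609911/61035156250::real)) * t + (32015780716354473/7629394531250::real)) * t + (2026713223949155873/7629394531250000::real))" using t0 by simp
  then show ?thesis using e by simp
qed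

lemma polyB: fixes s :: real assumes "s \<ge> (18521/10000::real)"
  shows "0 \<le> (-1::real)*s^0 + (3::real)*s^3 + (-6::real)*s^6 + (3::real)*s^7"
proof -
  define t where "t = s - (18521/10000::real)"
  have t0: "t \<ge> 0" using assms t_def by simp
  have e: "(-1::real)*s^0 + (3::real)*s^3 + (-6::real)*s^6 + (3::real)*s^7 = ((((((((3::real) * t + (328941/10000::real)) * t + (14943168783/100000000::real)) * t + (71672496549981/200000000000::real)) * t + (952253634516538101/2000000000000000::real)) * t + (33063372144420879925863/100000000000000000000::real)) * t + (93944337436055407772909541/1000000000000000000000000::real)) * t + (1504406030699827439775764123/10000000000000000000000000000::real))"
    unfolding t_def by algebra
  have "0 \<le> ((((((((3::real) * t + (328941/10000::real)) * t + (14943168783/100000000::real)) * t + (71672496549981/200000000000::real)) * t + (952253634516538101/2000000000000000::real)) * t + (33063372144420879925863/100000000000000000000::real)) * t + (93944337436055407772909541/1000000000000000000000000::real)) * t + (1504406030699827439775764123/10000000000000000000000000000::real))" using t0 by simp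
  then show ?thesis using e by simp
qed

lemma polyC: fixes s :: real assumes "s \<ge> (433/250::real)"
  shows "0 \<le> (-27783/64000::real)*s^0 + (-1::real)*s^2 + (183/40::real)*s^5 + (-6::real)*s^8 + (3::real)*s^9"
proof -
  define t where "t = s - (433/250::real)"
  have t0: "t \<ge> 0" using assms t_def by simp
  have e: "(-27783/64000::real)*s^0 + (-1::real)*s^2 + (183/40::real)*s^5 + (-6::real)*s^8 + (3::real)*s^9 = ((((((((((3::real) * t + (10191/250::real)) * t + (3763203/15625::real)) * t + (3145877931/3906250::real)) * t + (405376530093/244140625::real)) * t + (65662709603697/30517578125::real)) * t + (51974213792042511/30517578125000::real)) * t + (5730625191775543327/7629394531250000::real)) * t + (2206370742268131490057/15258789062500000000::real)) * t + (5272064817904106833267/1907348632812500000000::real))"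
    unfolding t_def by algebra
  have "0 \<le> ((((((((((3::real) * t + (10191/250::real)) * t + (3763203/15625::real)) * t + (3145877931/3906250::real)) * t + (405376530093/244140625::real)) * t + (65662709603697/30517578125::real)) * t + (51974213792042511/30517578125000::real)) * t + (5730625191775543327/7629394531250000::real)) * t + (2206370742268131490057/15258789062500000000::real)) * t + (5272064817904106833267/1907348632812500000000::real))" using t0 by simp
  then show ?thesis using e by simp
qed
lemma mono3:
  fixes y0 y A B c :: real
  assumes "0 \<le> y0" "y0 \<le> y" "0 \<le> A" "0 \<le> B" "3*A*y^2 + 2*B*y \<le> c"
  shows "c*y0 - A*y0^3 - B*y0^2 \<le> c*y - A*y^3 - B*y^2"
proof -
  have e: "(c*y - A*y^3 - B*y^2) - (c*y0 - A*y0^3 - B*y0^2)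
      = (y - y0) * (c - A*(y^2+y*y0+y0^2) - B*(y+y0))"
    by (simp add: algebra_simps power2_eq_square power3_eq_cube)
  have "y*y0 \<le> y^2" "y0^2 \<le> y^2" using assms(1,2)
    by (auto simp: power2_eq_square intro: mult_mono)
  then have "y^2+y*y0+y0^2 \<le> 3*y^2" by simp
  then have "A*(y^2+y*y0+y0^2) \<le> A*(3*y^2)" using assms(3) by (rule mult_left_mono)
  moreover have "B*(y+y0) \<le> B*(2*y)" using assms by (intro mult_left_mono) auto
  ultimately have "0 \<le> c - A*(y^2+y*y0+y0^2) - B*(y+y0)" using assms(5) by simp
  moreover have "0 \<le> y - y0" using assms by simp
  ultimately have "0 \<le> (y - y0) * (c - A*(y^2+y*y0+y0^2) - B*(y+y0))" by simp
  with e show ?thesis by simp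
qed

lemma core:
  fixes s al be :: real
  assumes s: "s \<ge> 433/250"
    and al1: "1/s^4 \<le> al" and al2: "al \<le> 1/(3*s^2)"
    and be1: "0 \<le> be" and be2: "be \<le> 1/s^4"
    and H: "s \<ge> 2 \<or> be \<ge> 1/(4*s^2) \<or> s \<ge> 18521/10000 \<or> be \<ge> 0.525*al"
  shows "0 \<le> 1 - 2/s + (be - s^3*be^3) + (al - (s/3)*al^2)"
proof -
  have sp: "s > 0" using s by simp
  have s5: "s^5 \<ge> 3"
  proof -
    have "(433/250::real)^5 \<le> s^5" using s by (intro power_mono) auto
    moreover have "3 \<le> (433/250::real)^5" by (simp add: power_divide)
    ultimately show ?thesis by linarith
  qed
  have cbe: "3*s^3*be^2 + 2*0*be \<le> 1"
  proof -
    have "be^2 \<le> (1/s^4)^2" using be1 be2 by (intro power_mono) auto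
    then have "s^3*be^2 \<le> s^3*(1/s^4)^2" using sp by (intro mult_left_mono) auto
    also have "\<dots> = 1/s^5" using sp by (simp add: field_simps)
    also have "\<dots> \<le> 1/3" using s5 sp by (simp add: divide_simps)
    finally show ?thesis by simp
  qed
  have cal: "3*0*al^2 + 2*(s/3)*al \<le> 1"
  proof -
    have "s*al \<le> s*(1/(3*s^2))" using al2 sp by (intro mult_left_mono) auto
    also have "\<dots> = 1/(3*s)" using sp by (simp add: field_simps power2_eq_square)
    also have "\<dots> \<le> 1" using s by (simp add: field_simps)
    finally show ?thesis by simp
  qed
  have al0: "0 \<le> 1/s^4" using sp by simp
  have Gal: "1/s^4 - (s/3)*(1/s^4)^2 \<le> al - (s/3)*al^2"
    using mono3[of "1/s^4" al 0 "s/3" 1] al0 al1 cal sp by simp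
  have Gbe0: "0 \<le> be - s^3*be^3"
    using mono3[of 0 be "s^3" 0 1] be1 cbe sp by simp
  consider "s \<ge> 2" | "be \<ge> 1/(4*s^2)" | "s \<ge> 18521/10000" | "be \<ge> 0.525*al" using H by blast
  then show ?thesis
  proof cases
    case 1
    have "0 \<le> al - (s/3)*al^2"
      using mono3[of 0 al 0 "s/3" 1] al0 al1 cal sp by simp
    moreover have "0 \<le> 1 - 2/s" using 1 sp by (simp add: field_simps)
    ultimately show ?thesis using Gbe0 by linarith
  next
    case 2
    define b0 where "b0 = 1/(4*s^2)"
    have "b0 - s^3*b0^3 \<le> be - s^3*be^3"
      using mono3[of b0 be "s^3" 0 1] 2 cbe sp unfolding b0_def by simp
    moreover have "1 - 2/s + (b0 - s^3*b0^3) + (1/s^4 - (s/3)*(1/s^4)^2)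
        = ((-64::real)*s^0 + (192::real)*s^3 + (-3::real)*s^4 + (48::real)*s^5 + (-384::real)*s^6 + (192::real)*s^7) / (192*s^7)"
      unfolding b0_def using sp by (simp add: field_simps) algebra
    moreover have "0 \<le> ((-64::real)*s^0 + (192::real)*s^3 + (-3::real)*s^4 + (48::real)*s^5 + (-384::real)*s^6 + (192::real)*s^7) / (192*s^7)"
      using polyA[OF s] sp by simp
    ultimately show ?thesis using Gal by linarith
  next
    case 3
    have "1 - 2/s + 0 + (1/s^4 - (s/3)*(1/s^4)^2)
        = ((-1::real)*s^0 + (3::real)*s^3 + (-6::real)*s^6 + (3::real)*s^7) / (3*s^7)"
      using sp by (simp add: field_simps) algebra
    moreover have "0 \<le> ((-1::real)*s^0 + (3::real)*s^3 + (-6::real)*s^6 + (3::real)*s^7) / (3*s^7)"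
      using polyB[OF 3] sp by simp
    ultimately show ?thesis using Gal Gbe0 by linarith
  next
    case 4
    have 4: "be \<ge> (21/40)*al" using 4 by simp
    have a0: "0 \<le> al" using al0 al1 by linarith
    have st1: "(21/40)*al - s^3*((21/40)*al)^3 \<le> be - s^3*be^3"
      using mono3[of "(21/40)*al" be "s^3" 0 1] 4 cbe sp a0 by simp
    have cal2: "3*((21/40)^3*s^3)*al^2 + 2*(s/3)*al \<le> (61/40)"
    proof -
      have "al^2 \<le> (1/(3*s^2))^2" using a0 al2 by (intro power_mono) auto
      then have "s^3*al^2 \<le> s^3*(1/(3*s^2))^2" using sp by (intro mult_left_mono) auto
      also have "\<dots> = 1/(9*s)" using sp by (simp add: field_simps power2_eq_square power3_eq_cube)
      also have "\<dots> \<le> 1" using s by (simp add: field_simps)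
      finally have X: "s^3*al^2 \<le> 1" .
      have "((21/40)::real)^3 = (9261/64000)" by (simp add: power_divide)
      then have e1: "3*((21/40)^3*s^3)*al^2 = (27783/64000)*(s^3*al^2)" by simp
      have e2: "2*(s/3)*al = (2/3)*(s*al)" by simp
      have "s*al \<le> 3/2" using cal by simp
      then show ?thesis unfolding e1 e2 using X by linarith
    qed
    have st2: "(61/40)*(1/s^4) - ((21/40)^3*s^3)*(1/s^4)^3 - (s/3)*(1/s^4)^2
        \<le> (61/40)*al - ((21/40)^3*s^3)*al^3 - (s/3)*al^2"
      using mono3[of "1/s^4" al "(21/40)^3*s^3" "s/3" "61/40"] al0 al1 cal2 sp by simp
    have e: "1 - 2/s + ((61/40)*(1/s^4) - ((21/40)^3*s^3)*(1/s^4)^3 - (s/3)*(1/s^4)^2)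
        = ((-27783/64000::real)*s^0 + (-1::real)*s^2 + (183/40::real)*s^5 + (-6::real)*s^8 + (3::real)*s^9) / (3*s^9)"
      using sp by (simp add: field_simps) algebra
    have "0 \<le> ((-27783/64000::real)*s^0 + (-1::real)*s^2 + (183/40::real)*s^5 + (-6::real)*s^8 + (3::real)*s^9) / (3*s^9)"
      using polyC[OF s] sp by simp
    moreover have "(21/40)*al - s^3*((21/40)*al)^3 + (al - (s/3)*al^2) = (61/40)*al - ((21/40)^3*s^3)*al^3 - (s/3)*al^2"
      by algebra
    ultimately show ?thesis using st1 st2 e by linarith
  qed
qed
theorem lemma4:
  fixes a :: "nat \<Rightarrow> real"
  assumes pos: "\<And>k. a k > 0"
    and a0: "a 0 = 1" and a1: "a 1 = 1"
    and entire: "\<And>z::complex. summable (\<lambda>k. complex_of_real (a k) * z ^ k)"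
    and q2: "3 \<le> qq a 2"
    and qmono: "\<And>n. n \<ge> 2 \<Longrightarrow> qq a n \<le> qq a (Suc n)"
    and cond: "\<And>j0. j0 \<ge> 2 \<Longrightarrow> qq a j0 < 4 \<Longrightarrow> qq a (j0 + 1) \<ge> 4 \<Longrightarrow>
                 qq a j0 \<ge> 3.4303 \<or> (j0 \<ge> 3 \<and> qq a (j0 - 1) / qq a (j0 + 1) \<ge> 0.525)"
    and k: "k \<ge> 2"
  shows "(-1) ^ k * phi a (rho a k) \<ge> 0"
proof -
  define Q where "Q = qq a"
  define P where "P n = (\<Prod>i=2..n. Q i)" for n
  have Q3: "Q n \<ge> 3" if "n \<ge> 2" for n
    using that
  proof (induction n rule: dec_induct)
    case base then show ?case using q2 Q_def by simp
  next
    case (step n) then show ?case using qmono[of n] Q_def by simp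
  qed
  have Ppos: "P n > 0" for n
    unfolding P_def using Q3 by (intro prod_pos) fastforce
  have PSuc: "P (Suc n) = P n * Q (Suc n)" if "n \<ge> 1" for n
    unfolding P_def using that by (simp add: prod.nat_ivl_Suc' mult.commute)
  have P1: "P 1 = 1" unfolding P_def by simp
  have Pmono: "P m \<le> P n" if "1 \<le> m" "m \<le> n" for m n
    using that(2)
  proof (induction n rule: dec_induct)
    case base then show ?case by simp
  next
    case (step n)
    have "P n \<le> P n * Q (Suc n)" using Ppos[of n] Q3[of "Suc n"] that step by simp
    then show ?case using PSuc[of n] that step by simp
  qed
  have aP: "a (Suc n) * P (Suc n) = a n" for n
  proof (induction n)
    case 0 then show ?case using a0 a1 P1 by simp
  next
    case (Suc n)
    have "a (Suc (Suc n)) * P (Suc (Suc n)) = a (Suc (Suc n)) * P (Suc n) * Q (Suc (Suc n))"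
      using PSuc[of "Suc n"] by simp
    also have "\<dots> = P (Suc n) * a (Suc n)^2 / a n"
      unfolding Q_def qq_def using pos[of n] pos[of "Suc (Suc n)"] by (simp add: field_simps)
    also have "\<dots> = a (Suc n)" using Suc pos[of n] by (simp add: field_simps power2_eq_square)
    finally show ?case .
  qed
  define x where "x = Q (Suc k)"
  define s where "s = sqrt x"
  have x3: "x \<ge> 3" using Q3[of "Suc k"] k x_def by simp
  have x0: "x \<ge> 0" using x3 by simp
  have sx: "s * s = x" "s^2 = x" unfolding s_def using x0 by simp_all
  have s1: "s \<ge> 433/250"
  proof (rule ccontr)
    assume "\<not> ?thesis"
    then have "s < 433/250" by simp
    moreover have "s \<ge> 0" using s_def x0 by simp
    ultimately have "s * s < (433/250) * (433/250)" by (intro mult_strict_mono) auto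
    then show False using sx x3 by simp
  qed
  have sp: "s > 0" using s1 by simp
  define r where "r = rho a k"
  have r: "r = P k * s"
    unfolding r_def rho_def P_def s_def x_def Q_def by simp
  define t where "t j = a j * r^j" for j
  have rp: "r > 0" using r Ppos sp by simp
  have tpos: "t j > 0" for j unfolding t_def using pos rp by simp
  have tnn: "0 \<le> t j" for j using tpos[of j] by simp
  have tSuc: "t (Suc j) * P (Suc j) = t j * r" for j
  proof -
    have "t (Suc j) * P (Suc j) = (a (Suc j) * P (Suc j)) * r^j * r" unfolding t_def by (simp add: algebra_simps)
    then show ?thesis using aP[of j] unfolding t_def by simp
  qed
  have tdec: "t (Suc j) \<le> t j" if "j \<ge> k" for j
  proof -
    have "P (Suc k) \<le> P (Suc j)" using that by (intro Pmono) auto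
    moreover have "P (Suc k) = P k * x" using PSuc[of k] k x_def by simp
    moreover have "P k * s \<le> P k * x"
      using Ppos[of k] sx s1 by (intro mult_left_mono) (auto simp: power2_eq_square)
    ultimately have "r \<le> P (Suc j)" using r by simp
    then have "t j * r \<le> t j * P (Suc j)" using tpos[of j] by (intro mult_left_mono) auto
    then have "t (Suc j) * P (Suc j) \<le> t j * P (Suc j)" using tSuc by simp
    then show ?thesis using Ppos[of "Suc j"] by simp
  qed
  have tinc: "t j \<le> t (Suc j)" if "Suc j \<le> k" for j
  proof -
    have "P (Suc j) \<le> P k" using that by (intro Pmono) auto
    moreover have "P k \<le> P k * s" using Ppos[of k] s1 by simp
    ultimately have "P (Suc j) \<le> r" using r by simp
    then have "t (Suc j) * P (Suc j) \<le> t (Suc j) * r" using tpos[of "Suc j"] by (intro mult_left_mono) auto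
    then have "t j * r \<le> t (Suc j) * r" using tSuc by simp
    then show ?thesis using rp by simp
  qed
  define u where "u = Q k"
  define v where "v = Q (Suc (Suc k))"
  define w where "w = Q (Suc (Suc (Suc k)))"
  have u3: "u \<ge> 3" using Q3 k u_def by simp
  have ux: "u \<le> x" using qmono[of k] k u_def x_def Q_def by simp
  have xv: "x \<le> v" using qmono[of "Suc k"] k v_def x_def Q_def by simp
  have vw: "v \<le> w" using qmono[of "Suc (Suc k)"] k v_def w_def Q_def by simp
  have Pk1: "P (Suc k) = P k * x" using PSuc[of k] k x_def by simp
  have Pk2: "P (Suc (Suc k)) = P k * x * v" using PSuc[of "Suc k"] Pk1 v_def by simp
  have Pk3: "P (Suc (Suc (Suc k))) = P k * x * v * w" using PSuc[of "Suc (Suc k)"] Pk2 w_def by simp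
  have Pkm: "P k = P (k - 1) * u" using PSuc[of "k - 1"] k u_def by simp
  have tk1: "t (Suc k) * s = t k"
  proof -
    have e: "t (Suc k) * (P k * (s*s)) = t k * (P k * s)" using tSuc[of k] Pk1 r sx(1) by simp
    have "(t (Suc k) * s) * (P k * s) = t (Suc k) * (P k * (s*s))" by (simp add: ac_simps)
    also note e
    finally have "(t (Suc k) * s) * (P k * s) = t k * (P k * s)" .
    then show ?thesis using Ppos[of k] sp by simp
  qed
  have tk2: "t (Suc (Suc k)) * (s * v) = t (Suc k)"
  proof -
    have e: "t (Suc (Suc k)) * (P k * (s*s) * v) = t (Suc k) * (P k * s)" using tSuc[of "Suc k"] Pk2 r sx(1) by simp
    have "(t (Suc (Suc k)) * (s * v)) * (P k * s) = t (Suc (Suc k)) * (P k * (s*s) * v)" by (simp add: ac_simps)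
    also note e
    finally have "(t (Suc (Suc k)) * (s * v)) * (P k * s) = t (Suc k) * (P k * s)" .
    then show ?thesis using Ppos[of k] sp by simp
  qed
  have tk3: "t (Suc (Suc (Suc k))) * (s * v * w) = t (Suc (Suc k))"
  proof -
    have e: "t (Suc (Suc (Suc k))) * (P k * (s*s) * v * w) = t (Suc (Suc k)) * (P k * s)" using tSuc[of "Suc (Suc k)"] Pk3 r sx(1) by simp
    have "(t (Suc (Suc (Suc k))) * (s * v * w)) * (P k * s) = t (Suc (Suc (Suc k))) * (P k * (s*s) * v * w)" by (simp add: ac_simps)
    also note e
    finally have "(t (Suc (Suc (Suc k))) * (s * v * w)) * (P k * s) = t (Suc (Suc k)) * (P k * s)" .
    then show ?thesis using Ppos[of k] sp by (simp add: ac_simps)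
  qed
  have tm1: "t k = t (k - 1) * s"
  proof -
    have "t k * P k = t (k - 1) * r" using tSuc[of "k - 1"] k by simp
    then have "t k * P k = (t (k - 1) * s) * P k" using r by (simp add: algebra_simps)
    then show ?thesis using Ppos[of k] by simp
  qed
  have tm2: "t (k - 1) = t (k - 2) * (u * s)"
  proof -
    have "t (k - 1) * P (k - 1) = t (k - 2) * r" using tSuc[of "k - 2"] k
      by (simp add: Suc_diff_Suc numeral_2_eq_2)
    then have "t (k - 1) * P (k - 1) = (t (k - 2) * (u * s)) * P (k - 1)" using r Pkm by (simp add: algebra_simps)
    then show ?thesis using Ppos[of "k - 1"] by simp
  qed
  have tm3: "t (k - 2) = t (k - 3) * (Q (k - 1) * u * s)" if "k \<ge> 3"
  proof -
    have "t (k - 2) * P (k - 2) = t (k - 3) * r" using tSuc[of "k - 3"] that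
      by (simp add: Suc_diff_Suc numeral_3_eq_3 numeral_2_eq_2)
    moreover have "P (k - 1) = P (k - 2) * Q (k - 1)" using PSuc[of "k - 2"] that
      by (simp add: Suc_diff_Suc numeral_2_eq_2)
    ultimately have "t (k - 2) * P (k - 2) = (t (k - 3) * (Q (k - 1) * u * s)) * P (k - 2)" using r Pkm by (simp add: algebra_simps)
    then show ?thesis using Ppos[of "k - 2"] by simp
  qed
  define f where "f j = a j * (-r)^j" for j
  have fsum: "summable f"
  proof -
    have "summable (\<lambda>j. complex_of_real (a j) * (complex_of_real (-r))^j)" by (rule entire)
    then have "summable (\<lambda>j. complex_of_real (f j))" unfolding f_def by (simp add: of_real_mult of_real_power)
    then show ?thesis by simp
  qed
  have ft: "f j = (-1)^j * t j" for j unfolding f_def t_def by (simp add: power_minus[of r])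
  have tlim: "t \<longlonglongrightarrow> 0"
  proof -
    have "(\<lambda>j. \<bar>f j\<bar>) \<longlonglongrightarrow> 0" using summable_LIMSEQ_zero[OF fsum] by (rule tendsto_rabs_zero)
    moreover have "\<bar>f j\<bar> = t j" for j using ft tpos[of j] by (simp add: abs_mult)
    ultimately show ?thesis by simp
  qed
  have phi: "phi a (rho a k) = suminf f" unfolding phi_def f_def r_def by simp
  define g where "g j = (-1)^k * f j" for j
  have gsum: "summable g" unfolding g_def using fsum by (rule summable_mult)
  have gphi: "(-1)^k * phi a (rho a k) = suminf g"
    unfolding phi g_def using suminf_mult[OF fsum] by simp
  have mm: "(-1::real)^k * (-1)^k = 1" by (simp flip: power_mult_distrib)
  define b where "b n = t (n + k)" for n
  have gb: "g (n + k) = (-1)^n * b n" for n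
  proof -
    have "g (n + k) = ((-1)^k * (-1)^k) * ((-1)^n * t (n + k))" unfolding g_def ft by (simp add: power_add ac_simps)
    then show ?thesis using mm b_def by simp
  qed
  define cc where "cc i = (if i < k then t (k - Suc i) else 0)" for i
  have gc: "g (k - Suc i) = - ((-1)^i * cc i)" if ik: "i < k" for i
  proof -
    obtain d where d0: "k = Suc (i + d)" using less_imp_Suc_add[OF ik] by blast
    then have d: "k = Suc i + d" by simp
    have "g (k - Suc i) = ((-1)^d * (-1)^d) * (- ((-1)^i * t (k - Suc i)))"
      unfolding g_def ft d by (simp add: power_add ac_simps)
    moreover have "(-1::real)^d * (-1)^d = 1" by (simp flip: power_mult_distrib)
    ultimately show ?thesis using ik cc_def by simp
  qed
  have split: "suminf g = (\<Sum>n. (-1)^n * b n) - (\<Sum>i<k. (-1)^i * cc i)"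
  proof -
    have "suminf g = (\<Sum>n. g (n + k)) + (\<Sum>i<k. g i)" by (rule suminf_split_initial_segment[OF gsum])
    also have "(\<Sum>i<k. g i) = (\<Sum>i<k. g (k - Suc i))" by (rule sum.nat_diff_reindex[symmetric])
    also have "\<dots> = (\<Sum>i<k. - ((-1)^i * cc i))" using gc by simp
    also have "(\<Sum>n. g (n + k)) = (\<Sum>n. (-1)^n * b n)" using gb by simp
    finally show ?thesis by (simp add: sum_negf)
  qed
  have Lb: "b 0 - b 1 + b 2 - b 3 \<le> (\<Sum>n. (-1)^n * b n)"
  proof -
    have "b \<longlonglongrightarrow> 0" unfolding b_def using LIMSEQ_ignore_initial_segment[OF tlim, of k] by simp
    moreover have "\<And>n. 0 \<le> b n" unfolding b_def using tnn by blast
    moreover have "\<And>n. b (Suc n) \<le> b n" unfolding b_def using tdec by simp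
    ultimately have "(\<Sum>i<2*2. (-1)^i * b i) \<le> (\<Sum>n. (-1)^n * b n)" by (rule summable_Leibniz'(2))
    moreover have "(\<Sum>i<2*2. (-1)^i * b i) = b 0 - b 1 + b 2 - b 3" by (simp add: eval_nat_numeral)
    ultimately show ?thesis by simp
  qed
  have Lc: "(\<Sum>i<k. (-1)^i * cc i) \<le> cc 0 - cc 1 + cc 2"
  proof -
    have "(\<lambda>i. (-1)^i * cc i) sums (\<Sum>i\<in>{..<k}. (-1)^i * cc i)"
      by (rule sums_finite) (auto simp: cc_def)
    then have e: "(\<Sum>i. (-1)^i * cc i) = (\<Sum>i<k. (-1)^i * cc i)" by (rule sums_unique[symmetric])
    have "cc \<longlonglongrightarrow> 0"
    proof (rule tendsto_eventually)
      show "\<forall>\<^sub>F i in sequentially. cc i = 0" unfolding eventually_sequentially cc_def by (intro exI[of _ k]) auto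
    qed
    moreover have "\<And>n. 0 \<le> cc n" unfolding cc_def using tnn by simp
    moreover have "\<And>n. cc (Suc n) \<le> cc n"
    proof -
      fix n
      show "cc (Suc n) \<le> cc n"
      proof (cases "Suc n < k")
        case True
        then have "t (k - Suc (Suc n)) \<le> t (Suc (k - Suc (Suc n)))" by (intro tinc) auto
        moreover have "Suc (k - Suc (Suc n)) = k - Suc n" using True by simp
        ultimately show ?thesis using True cc_def by simp
      next
        case False
        then show ?thesis unfolding cc_def using tnn by simp
      qed
    qed
    ultimately have "(\<Sum>i. (-1)^i * cc i) \<le> (\<Sum>i<2*1+1. (-1)^i * cc i)" by (rule summable_Leibniz'(4))
    moreover have "(\<Sum>i<2*1+1. (-1)^i * cc i) = cc 0 - cc 1 + cc 2" by (simp add: eval_nat_numeral)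
    ultimately show ?thesis using e by simp
  qed
  define T where "T = t k"
  have Tp: "T > 0" unfolding T_def by (rule tpos)
  have v0: "v > 0" using xv x3 by simp
  have w0: "w > 0" using vw v0 by simp
  have u0: "u > 0" using u3 by simp
  have hb1: "b 1 = T/s" using tk1 sp unfolding b_def T_def by (simp add: field_simps)
  have hb2: "b 2 = T/(s*s*v)" using tk2 hb1 sp v0 unfolding b_def T_def
    by (simp add: field_simps eval_nat_numeral)
  have hb3': "b 3 = b 2 / (s*v*w)" using tk3 sp v0 w0 unfolding b_def
    by (simp add: field_simps eval_nat_numeral)
  have hb3: "b 3 = T/(s*s*s*v*v*w)" unfolding hb3' hb2 using sp v0 w0 by (simp add: field_simps)
  have hb0: "b 0 = T" unfolding b_def T_def by simp
  have hc0: "cc 0 = T/s" using tm1 sp k unfolding cc_def T_def by (simp add: field_simps)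
  have hc1: "cc 1 = T/(s*s*u)" using tm1 tm2 sp u0 k unfolding cc_def T_def
    by (simp add: field_simps numeral_2_eq_2)
  have hc2: "0 \<le> cc 2 \<and> cc 2 \<le> T/(3*s*s*s*u*u)"
  proof (cases "2 < k")
    case True
    define p where "p = Q (k - 1)"
    have p3: "p \<ge> 3" unfolding p_def using Q3 True by simp
    have c2: "cc 2 = t (k - 3)" unfolding cc_def using True by (simp add: numeral_3_eq_3)
    have "T = t (k - 3) * (p * u * s * u * s * s)" using tm1 tm2 tm3 True unfolding T_def p_def
      by (simp add: ac_simps)
    then have "cc 2 = T / (p * u * s * u * s * s)" using c2 p3 u0 sp by (simp add: field_simps)
    moreover have "T / (p * u * s * u * s * s) \<le> T/(3*s*s*s*u*u)"
      using Tp p3 u0 sp by (intro divide_left_mono) (auto simp: ac_simps intro!: mult_pos_pos mult_right_mono)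
    ultimately show ?thesis using tnn[of "k - 3"] c2 by linarith
  next
    case False
    then show ?thesis unfolding cc_def using Tp sp u0 by simp
  qed
  define al where "al = 1/(s^2*u)"
  define be where "be = 1/(s^2*v)"
  have s2p: "s^2 > 0" using sp by simp
  have al1: "1/s^4 \<le> al"
  proof -
    have "s^2*u \<le> s^2*s^2" using ux sx s2p by (intro mult_left_mono) auto
    then have "1/(s^2*s^2) \<le> 1/(s^2*u)" using s2p u0 by (intro divide_left_mono) auto
    then show ?thesis unfolding al_def by (simp add: power_add[symmetric])
  qed
  have al2: "al \<le> 1/(3*s^2)"
  proof -
    have "s^2*3 \<le> s^2*u" using u3 s2p by (intro mult_left_mono) auto
    then have "1/(s^2*u) \<le> 1/(s^2*3)" using s2p u0 by (intro divide_left_mono) auto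
    then show ?thesis unfolding al_def by (simp add: ac_simps)
  qed
  have be1: "0 \<le> be" unfolding be_def using s2p v0 by simp
  have be2: "be \<le> 1/s^4"
  proof -
    have "s^2*s^2 \<le> s^2*v" using xv sx s2p by (intro mult_left_mono) auto
    then have "1/(s^2*v) \<le> 1/(s^2*s^2)" using s2p v0 by (intro divide_left_mono) auto
    then show ?thesis unfolding be_def by (simp add: power_add[symmetric])
  qed
  have H: "s \<ge> 2 \<or> be \<ge> 1/(4*s^2) \<or> s \<ge> 18521/10000 \<or> be \<ge> 0.525*al"
  proof (cases "x \<ge> 4")
    case True
    have "s \<ge> 2"
    proof (rule ccontr)
      assume "\<not> ?thesis"
      then have "s * s < 2 * 2" using sp by (intro mult_strict_mono) auto
      then show False using sx True by simp
    qed
    then show ?thesis by simp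
  next
    case x4: False
    show ?thesis
    proof (cases "v < 4")
      case True
      have "s^2*v \<le> s^2*4" using True s2p by (intro mult_left_mono) auto
      then have "1/(s^2*4) \<le> 1/(s^2*v)" using s2p v0 by (intro divide_left_mono) auto
      then show ?thesis unfolding be_def by (simp add: ac_simps)
    next
      case False
      have "qq a (Suc k) \<ge> 3.4303 \<or> (Suc k \<ge> 3 \<and> qq a (Suc k - 1) / qq a (Suc k + 1) \<ge> 0.525)"
        using cond[of "Suc k"] k x4 False unfolding x_def v_def Q_def by simp
      then have "x \<ge> 3.4303 \<or> u / v \<ge> 0.525" unfolding x_def v_def u_def Q_def by auto
      then show ?thesis
      proof
        assume xx: "x \<ge> 3.4303"
        have "s \<ge> 18521/10000"
        proof (rule ccontr)
          assume "\<not> ?thesis"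
          then have "s * s < (18521/10000) * (18521/10000)" using sp by (intro mult_strict_mono) auto
          then show False using sx xx by simp
        qed
        then show ?thesis by simp
      next
        assume uv: "u / v \<ge> 0.525"
        then have "0.525 * v \<le> u" using v0 by (simp add: field_simps)
        then have "0.525 * (s^2 * v) \<le> s^2 * u" using s2p by (simp add: mult_left_mono ac_simps)
        then have "0.525 * al \<le> be" unfolding al_def be_def using s2p u0 v0 by (simp add: field_simps)
        then show ?thesis by simp
      qed
    qed
  qed
  have G: "0 \<le> 1 - 2/s + (be - s^3*be^3) + (al - (s/3)*al^2)"
    by (rule core[OF s1 al1 al2 be1 be2 H])
  have e1: "T*al = T/(s*s*u)" unfolding al_def by (simp add: power2_eq_square)
  have e2: "T*be = T/(s*s*v)" unfolding be_def by (simp add: power2_eq_square)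
  have e3: "b 3 \<le> T*s^3*be^3"
  proof -
    have "T*s^3*be^3 = T/(s*s*s*v*v*v)" unfolding be_def using sp v0 by (simp add: field_simps eval_nat_numeral)
    moreover have "T/(s*s*s*v*v*w) \<le> T/(s*s*s*v*v*v)"
      using Tp sp v0 vw by (intro divide_left_mono mult_left_mono) (auto intro!: mult_pos_pos)
    ultimately show ?thesis using hb3 by simp
  qed
  have e4: "cc 2 \<le> T*(s/3)*al^2"
  proof -
    have "T*(s/3)*al^2 = T/(3*s*s*s*u*u)" unfolding al_def using sp u0 by (simp add: field_simps eval_nat_numeral)
    then show ?thesis using hc2 by simp
  qed
  have "T * (1 - 2/s + (be - s^3*be^3) + (al - (s/3)*al^2))
      = T - T/s + T*be - T*s^3*be^3 - T/s + T*al - T*(s/3)*al^2"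
    by (simp add: algebra_simps)
  moreover have "0 \<le> T * (1 - 2/s + (be - s^3*be^3) + (al - (s/3)*al^2))"
    using Tp G by simp
  ultimately have fin: "0 \<le> (b 0 - b 1 + b 2 - b 3) - (cc 0 - cc 1 + cc 2)"
    using hb0 hb1 hb2 e1 e2 e3 e4 hc0 hc1 by linarith
  show ?thesis using gphi split Lb Lc fin by linarith
qed
end
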